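(* Let $(E,\tau)$ be a violator space. Then $(E,\tau)$ is uniquely generated if and only if $\tau$ satisfies the anti-exchange property: for all $X\subseteq E$ and all distinct $p,q\in E$ with $p,q\notin\tau(X)$, if $p\in\tau(X\cup\{q\})$ then $q\notin\tau(X\cup\{p\})$.
   Context: $E$ is a finite set and $\tau:2^E\to 2^E$. $(E,\tau)$ is a violator space if (C1) $X\subseteq\tau(X)$ for all $X\subseteq E$, and (C22) for all $F,G\subseteq E$, $F\subseteq G\subseteq\tau(F)$ implies $\tau(G)=\tau(F)$. (Equivalently, $V(X)=E-\tau(X)$ satisfies $G\cap V(G)=\emptyset$ and, for $F\subseteq G$ with $G\cap V(F)=\emptyset$, $V(G)=V(F)$.) For $X\subseteq E$, a generator of $X$ is any $B\subseteq E$ with $\tau(B)=\tau(X)$; a basis of $X$ is an inclusion-minimal generator of $X$. The space is uniquely generated if every $X\subseteq E$ has exactly one basis. *)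

theory Defs
  imports Main
begin

definition violator_space :: "'a set \<Rightarrow> ('a set \<Rightarrow> 'a set) \<Rightarrow> bool" where
  "violator_space E \<tau> \<longleftrightarrow> finite E
     \<and> (\<forall>X. X \<subseteq> E \<longrightarrow> \<tau> X \<subseteq> E)
     \<and> (\<forall>X. X \<subseteq> E \<longrightarrow> X \<subseteq> \<tau> X)
     \<and> (\<forall>F G. F \<subseteq> E \<longrightarrow> G \<subseteq> E \<longrightarrow> F \<subseteq> G \<longrightarrow> G \<subseteq> \<tau> F \<longrightarrow> \<tau> G = \<tau> F)"

definition generator :: "'a set \<Rightarrow> ('a set \<Rightarrow> 'a set) \<Rightarrow> 'a set \<Rightarrow> 'a set \<Rightarrow> bool" where
  "generator E \<tau> X B \<longleftrightarrow> B \<subseteq> E \<and> \<tau> B = \<tau> X"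

definition basis :: "'a set \<Rightarrow> ('a set \<Rightarrow> 'a set) \<Rightarrow> 'a set \<Rightarrow> 'a set \<Rightarrow> bool" where
  "basis E \<tau> X B \<longleftrightarrow> generator E \<tau> X B \<and> (\<forall>B'. B' \<subset> B \<longrightarrow> \<not> generator E \<tau> X B')"

definition uniquely_generated :: "'a set \<Rightarrow> ('a set \<Rightarrow> 'a set) \<Rightarrow> bool" where
  "uniquely_generated E \<tau> \<longleftrightarrow> (\<forall>X. X \<subseteq> E \<longrightarrow> (\<exists>!B. basis E \<tau> X B))"

definition anti_exchange :: "'a set \<Rightarrow> ('a set \<Rightarrow> 'a set) \<Rightarrow> bool" where
  "anti_exchange E \<tau> \<longleftrightarrow> (\<forall>X p q. X \<subseteq> E \<longrightarrow> p \<in> E \<longrightarrow> q \<in> E \<longrightarrow> p \<noteq> q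
     \<longrightarrow> p \<notin> \<tau> X \<longrightarrow> q \<notin> \<tau> X \<longrightarrow> p \<in> \<tau> (X \<union> {q}) \<longrightarrow> q \<notin> \<tau> (X \<union> {p}))"

end

theory Submission
  imports Defs
begin

lemma vs_facts:
  assumes "violator_space E \<tau>"
  shows "finite E" "\<And>X. X \<subseteq> E \<Longrightarrow> \<tau> X \<subseteq> E" "\<And>X. X \<subseteq> E \<Longrightarrow> X \<subseteq> \<tau> X"
    "\<And>F G. F \<subseteq> E \<Longrightarrow> G \<subseteq> E \<Longrightarrow> F \<subseteq> G \<Longrightarrow> G \<subseteq> \<tau> F \<Longrightarrow> \<tau> G = \<tau> F"
proof -
  note d = assms[unfolded violator_space_def]
  show "finite E" using d by (rule conjunct1)
  show "\<And>X. X \<subseteq> E \<Longrightarrow> \<tau> X \<subseteq> E" using d[THEN conjunct2, THEN conjunct1, rule_format] .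
  show "\<And>X. X \<subseteq> E \<Longrightarrow> X \<subseteq> \<tau> X" using d[THEN conjunct2, THEN conjunct2, THEN conjunct1, rule_format] .
  show "\<And>F G. F \<subseteq> E \<Longrightarrow> G \<subseteq> E \<Longrightarrow> F \<subseteq> G \<Longrightarrow> G \<subseteq> \<tau> F \<Longrightarrow> \<tau> G = \<tau> F"
    using d[THEN conjunct2, THEN conjunct2, THEN conjunct2, rule_format] .
qed

lemma basis_within:
  assumes vs: "violator_space E \<tau>" and G: "G \<subseteq> E" "\<tau> G = \<tau> X"
  shows "\<exists>B. B \<subseteq> G \<and> basis E \<tau> X B"
proof -
  let ?P = "\<lambda>B. B \<subseteq> G \<and> generator E \<tau> X B"
  have "?P G" using G unfolding generator_def by auto
  then obtain B where B: "?P B" and min: "\<forall>B'. ?P B' \<longrightarrow> card B \<le> card B'"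
    using ex_has_least_nat[of ?P G card] by auto
  have fin: "finite B" using finite_subset[OF _ vs_facts(1)[OF vs]] B G by auto
  have "\<forall>B'. B' \<subset> B \<longrightarrow> \<not> generator E \<tau> X B'"
  proof (intro allI impI notI)
    fix B' assume "B' \<subset> B" "generator E \<tau> X B'"
    then have "?P B'" using B by auto
    moreover have "card B' < card B" using \<open>B' \<subset> B\<close> fin psubset_card_mono by blast
    ultimately show False using min[rule_format, of B'] by simp
  qed
  hence "basis E \<tau> X B" using B unfolding basis_def by simp
  thus ?thesis using B by auto
qed

lemma ue_to_ae:
  assumes vs: "violator_space E \<tau>" and ug: "uniquely_generated E \<tau>"
  shows "anti_exchange E \<tau>"
  unfolding anti_exchange_def
proof (intro allI impI notI)
  note V = vs_facts[OF vs]
  fix X p q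
  assume X: "X \<subseteq> E" and p: "p \<in> E" and q: "q \<in> E" and pq: "p \<noteq> q"
    and pn: "p \<notin> \<tau> X" and qn: "q \<notin> \<tau> X" and pi: "p \<in> \<tau> (X \<union> {q})"
    and qi: "q \<in> \<tau> (X \<union> {p})"
  let ?Y = "X \<union> {p, q}"
  have Y: "?Y \<subseteq> E" using X p q by auto
  have Xq: "X \<union> {q} \<subseteq> E" "X \<union> {p} \<subseteq> E" using X p q by auto
  have "?Y \<subseteq> \<tau> (X \<union> {q})" using V(3)[OF Xq(1)] pi by auto
  hence e1: "\<tau> ?Y = \<tau> (X \<union> {q})" using V(4)[OF Xq(1) Y] by auto
  have "?Y \<subseteq> \<tau> (X \<union> {p})" using V(3)[OF Xq(2)] qi by auto
  hence e2: "\<tau> ?Y = \<tau> (X \<union> {p})" using V(4)[OF Xq(2) Y] by auto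
  obtain B1 where B1: "B1 \<subseteq> X \<union> {q}" "basis E \<tau> ?Y B1"
    using basis_within[OF vs Xq(1) e1[symmetric]] by blast
  obtain B2 where B2: "B2 \<subseteq> X \<union> {p}" "basis E \<tau> ?Y B2"
    using basis_within[OF vs Xq(2) e2[symmetric]] by blast
  have "\<exists>!B. basis E \<tau> ?Y B" using ug Y unfolding uniquely_generated_def by simp
  hence "B1 = B2" using B1(2) B2(2) by (metis)
  hence "B1 \<subseteq> X" using B1 B2 pq by auto
  have tB: "\<tau> B1 = \<tau> ?Y" using B1 unfolding basis_def generator_def by auto
  have "X \<subseteq> \<tau> B1" using tB V(3)[OF Y] by auto
  hence "\<tau> X = \<tau> B1" using V(4)[of B1 X] \<open>B1 \<subseteq> X\<close> X by auto
  hence "p \<in> \<tau> X" using tB V(3)[OF Y] by auto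
  thus False using pn by simp
qed

lemma basis_char:
  assumes vs: "violator_space E \<tau>" and ae: "anti_exchange E \<tau>" and X: "X \<subseteq> E"
    and B: "basis E \<tau> X B"
  shows "B = {e \<in> \<tau> X. \<tau> (\<tau> X - {e}) \<noteq> \<tau> X}"
proof -
  note V = vs_facts[OF vs]
  let ?T = "\<tau> X"
  have BE: "B \<subseteq> E" and tB: "\<tau> B = ?T" using B unfolding basis_def generator_def by auto
  have TE: "?T \<subseteq> E" using V(2)[OF X] .
  have BT: "B \<subseteq> ?T" using V(3)[OF BE] tB by simp
  have finT: "finite ?T" using TE V(1) finite_subset by blast
  show ?thesis
  proof
    show "{e \<in> ?T. \<tau> (?T - {e}) \<noteq> ?T} \<subseteq> B"
    proof
      fix e assume e: "e \<in> {e \<in> ?T. \<tau> (?T - {e}) \<noteq> ?T}"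
      show "e \<in> B"
      proof (rule ccontr)
        assume "e \<notin> B"
        hence "B \<subseteq> ?T - {e}" using BT by auto
        hence "\<tau> (?T - {e}) = \<tau> B" using V(4)[OF BE, of "?T - {e}"] TE tB by auto
        thus False using e tB by auto
      qed
    qed
  next
    show "B \<subseteq> {e \<in> ?T. \<tau> (?T - {e}) \<noteq> ?T}"
    proof
      fix e assume eB: "e \<in> B"
      have eT: "e \<in> ?T" using eB BT by auto
      have "\<tau> (?T - {e}) \<noteq> ?T"
      proof
        assume te: "\<tau> (?T - {e}) = ?T"
        let ?B' = "B - {e}"
        have B'E: "?B' \<subseteq> E" using BE by auto
        have "\<not> generator E \<tau> X ?B'" using B eB unfolding basis_def by blast
        hence ntB': "\<tau> ?B' \<noteq> ?T" using B'E unfolding generator_def by auto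
        have enot: "e \<notin> \<tau> ?B'"
        proof
          assume "e \<in> \<tau> ?B'"
          hence "B \<subseteq> \<tau> ?B'" using V(3)[OF B'E] by auto
          hence "\<tau> B = \<tau> ?B'" using V(4)[OF B'E BE] by auto
          thus False using ntB' tB by simp
        qed
        let ?P = "\<lambda>Z. ?B' \<subseteq> Z \<and> Z \<subseteq> ?T - {e} \<and> e \<notin> \<tau> Z"
        have "?P ?B'" using enot BT by auto
        then obtain Z where Z: "?P Z" and zmin: "\<forall>Z'. ?P Z' \<longrightarrow> card (?T - Z) \<le> card (?T - Z')"
          using ex_has_least_nat[of ?P ?B' "\<lambda>Z. card (?T - Z)"] by blast
        have ZE: "Z \<subseteq> E" using Z TE by auto
        have TeE: "?T - {e} \<subseteq> E" using TE by auto
        have "\<not> (?T - {e} \<subseteq> \<tau> Z)"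
        proof
          assume "?T - {e} \<subseteq> \<tau> Z"
          hence "\<tau> (?T - {e}) = \<tau> Z" using V(4)[OF ZE TeE] Z by auto
          thus False using te eT Z by auto
        qed
        then obtain z where z: "z \<in> ?T" "z \<noteq> e" "z \<notin> \<tau> Z" by auto
        have zZ: "z \<notin> Z" using z V(3)[OF ZE] by auto
        have "card (?T - (Z \<union> {z})) < card (?T - Z)"
          using finT z zZ by (intro psubset_card_mono) auto
        hence "\<not> ?P (Z \<union> {z})"
        proof (intro notI)
          assume lt: "card (?T - (Z \<union> {z})) < card (?T - Z)" and PZ: "?P (Z \<union> {z})"
          have "card (?T - Z) \<le> card (?T - (Z \<union> {z}))" using zmin[rule_format, OF PZ] .
          thus False using lt by simp
        qed
        hence ez: "e \<in> \<tau> (Z \<union> {z})" using Z z by auto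
        have zE: "z \<in> E" "e \<in> E" using z eT TE by auto
        have AE: "\<And>X p q. X \<subseteq> E \<Longrightarrow> p \<in> E \<Longrightarrow> q \<in> E \<Longrightarrow> p \<noteq> q
     \<Longrightarrow> p \<notin> \<tau> X \<Longrightarrow> q \<notin> \<tau> X \<Longrightarrow> p \<in> \<tau> (X \<union> {q}) \<Longrightarrow> q \<notin> \<tau> (X \<union> {p})"
          using ae unfolding anti_exchange_def by metis
        have "z \<notin> \<tau> (Z \<union> {e})"
        proof (rule AE[OF ZE zE(2) zE(1)])
          show "e \<noteq> z" using z by simp
          show "e \<notin> \<tau> Z" using Z by simp
          show "z \<notin> \<tau> Z" using z by simp
          show "e \<in> \<tau> (Z \<union> {z})" by (rule ez)
        qed
        moreover have "\<tau> (Z \<union> {e}) = \<tau> B"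
        proof -
          have "B \<subseteq> Z \<union> {e}" using Z by auto
          moreover have "Z \<union> {e} \<subseteq> \<tau> B" using Z tB eT by auto
          ultimately show ?thesis using V(4)[OF BE, of "Z \<union> {e}"] ZE zE by auto
        qed
        ultimately show False using z tB by auto
      qed
      thus "e \<in> {e \<in> ?T. \<tau> (?T - {e}) \<noteq> ?T}" using eT by auto
    qed
  qed
qed

theorem mainTheorem9:
  assumes "violator_space E \<tau>"
  shows "uniquely_generated E \<tau> \<longleftrightarrow> anti_exchange E \<tau>"
proof
  assume "uniquely_generated E \<tau>" thus "anti_exchange E \<tau>" using ue_to_ae assms by blast
next
  assume ae: "anti_exchange E \<tau>"
  show "uniquely_generated E \<tau>"
    unfolding uniquely_generated_def
  proof (intro allI impI)
    fix X assume X: "X \<subseteq> E"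
    obtain B where "basis E \<tau> X B" using basis_within[OF assms X refl] by blast
    moreover have "\<And>B'. basis E \<tau> X B' \<Longrightarrow> B' = B"
    proof -
      fix B' assume "basis E \<tau> X B'"
      then show "B' = B" using basis_char[OF assms ae X, of B'] basis_char[OF assms ae X, of B] calculation by simp
    qed
    ultimately show "\<exists>!B. basis E \<tau> X B" by (rule ex1I)
  qed
qed

end
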